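(* Let $\mathcal{G}$ be a compact group with normalized Haar measure and let $g\mapsto V_g$, $g\mapsto\tilde V_g$ be unitary representations of $\mathcal{G}$ on $\mathbb{C}^d$. Let $G=\{\overline{V_g}\otimes\tilde V_g: g\in\mathcal{G}\}$ and $G'=\{X\in\mathcal{M}_{d^2}: [X,Y]=0\ \forall Y\in G\}$. Let $|\Omega\rangle=d^{-1/2}\sum_j|j,j\rangle$, $\mathcal{S}=\{\rho\in\mathcal{M}_{d^2}:\rho\ge0,\ \operatorname{tr}_1\rho=\operatorname{tr}_2\rho=\mathbb{1}/d\}$, $\mathcal{U}=\mathrm{conv}\{(\mathbb{1}\otimes U)|\Omega\rangle\langle\Omega|(\mathbb{1}\otimes U^\dagger): U\text{ unitary}\}$, and $\mathcal{W}=\{W\in\mathcal{M}_{d^2}: W=W^\dagger,\ \operatorname{tr}[W\sigma]\ge0\ \forall\sigma\in\mathcal{U}\}$. Let $\rho\in\mathcal{S}\cap G'$. Then $\rho\in\mathcal{U}$ if and only if $\operatorname{tr}[W\rho]\ge0$ for all $W\in\mathcal{W}\cap G'$. Moreover, $$\inf\{\alpha_p+\alpha_n: \rho=\alpha_p\sigma_p-\alpha_n\sigma_n,\ \alpha_{p,n}\ge0,\ \sigma_{p,n}\in\mathcal{U}\}=\inf\{\alpha_p+\alpha_n: \rho=\alpha_p\sigma_p-\alpha_n\sigma_n,\ \alpha_{p,n}\ge0,\ \sigma_{p,n}\in\mathcal{U}\cap G'\},$$ and the same equality holds with $\alpha_p+\alpha_n$ replaced by $\alpha_n$ in both infima.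
   Context: The condition $\rho_T\in G'$ for the Jamiolkowski state $\rho_T=(\mathrm{id}\otimes T)(|\Omega\rangle\langle\Omega|)$ is equivalent to covariance of the channel $T$: $T(V_g\,\cdot\,V_g^\dagger)=\tilde V_gT(\cdot)\tilde V_g^\dagger$ for all $g$. $\overline{V_g}$ denotes the entrywise complex conjugate. *)

theory Defs
  imports "HOL-Analysis.Analysis" "HOL-Library.Complex_Order"
begin

definition compact_group ::
  "'g topology \<Rightarrow> ('g \<Rightarrow> 'g \<Rightarrow> 'g) \<Rightarrow> 'g \<Rightarrow> ('g \<Rightarrow> 'g) \<Rightarrow> bool" where
  "compact_group T mul e ginv \<longleftrightarrow>
     e \<in> topspace T \<and>
     (\<forall>x\<in>topspace T. \<forall>y\<in>topspace T. mul x y \<in> topspace T) \<and>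
     (\<forall>x\<in>topspace T. ginv x \<in> topspace T) \<and>
     (\<forall>x\<in>topspace T. \<forall>y\<in>topspace T. \<forall>z\<in>topspace T. mul (mul x y) z = mul x (mul y z)) \<and>
     (\<forall>x\<in>topspace T. mul e x = x \<and> mul x e = x) \<and>
     (\<forall>x\<in>topspace T. mul (ginv x) x = e \<and> mul x (ginv x) = e) \<and>
     continuous_map (prod_topology T T) T (\<lambda>(x, y). mul x y) \<and>
     continuous_map T T ginv \<and>
     compact_space T \<and> Hausdorff_space T"

definition cadj :: "complex^'m^'n \<Rightarrow> complex^'n^'m" where
  "cadj A = (\<chi> i j. cnj (A $ j $ i))"

definition cconj :: "complex^'m^'n \<Rightarrow> complex^'m^'n" where
  "cconj A = (\<chi> i j. cnj (A $ i $ j))"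

definition unitary_mat :: "complex^'n^'n \<Rightarrow> bool" where
  "unitary_mat U \<longleftrightarrow> cadj U ** U = mat 1 \<and> U ** cadj U = mat 1"

definition hermitian :: "complex^'n^'n \<Rightarrow> bool" where
  "hermitian A \<longleftrightarrow> cadj A = A"

text \<open>Positive semidefinite: all expectation values are nonnegative reals
  (order on complex numbers from HOL-Library.Complex_Order).\<close>
definition psd :: "complex^'n^'n \<Rightarrow> bool" where
  "psd A \<longleftrightarrow> (\<forall>x :: complex^'n. 0 \<le> (\<Sum>i\<in>UNIV. \<Sum>j\<in>UNIV. cnj (x $ i) * A $ i $ j * x $ j))"

definition unitary_rep ::
  "'g topology \<Rightarrow> ('g \<Rightarrow> 'g \<Rightarrow> 'g) \<Rightarrow> ('g \<Rightarrow> complex^'n^'n) \<Rightarrow> bool" where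
  "unitary_rep T mul V \<longleftrightarrow>
     (\<forall>g\<in>topspace T. unitary_mat (V g)) \<and>
     (\<forall>g\<in>topspace T. \<forall>h\<in>topspace T. V (mul g h) = V g ** V h) \<and>
     continuous_map T euclidean V"

text \<open>Kronecker product A \<otimes> B, first tensor factor = first index component.\<close>
definition kron :: "complex^'n^'n \<Rightarrow> complex^'n^'n \<Rightarrow> complex^('n \<times> 'n)^('n \<times> 'n)" where
  "kron A B = (\<chi> p q. A $ fst p $ fst q * B $ snd p $ snd q)"

definition ptr1 :: "complex^('n \<times> 'n)^('n \<times> 'n) \<Rightarrow> complex^'n^'n" where
  "ptr1 \<rho> = (\<chi> j l. \<Sum>i\<in>UNIV. \<rho> $ (i, j) $ (i, l))"

definition ptr2 :: "complex^('n \<times> 'n)^('n \<times> 'n) \<Rightarrow> complex^'n^'n" where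
  "ptr2 \<rho> = (\<chi> i k. \<Sum>j\<in>UNIV. \<rho> $ (i, j) $ (k, j))"

definition Omega :: "complex^('n::finite \<times> 'n)" where
  "Omega = (\<chi> p. if fst p = snd p then complex_of_real (1 / sqrt (real CARD('n))) else 0)"

definition proj :: "complex^'m \<Rightarrow> complex^'m^'m" where
  "proj v = (\<chi> a b. v $ a * cnj (v $ b))"

definition Sset :: "(complex^('n::finite \<times> 'n)^('n \<times> 'n)) set" where
  "Sset = {\<rho>. psd \<rho> \<and> ptr1 \<rho> = mat (1 / of_nat CARD('n)) \<and>
                  ptr2 \<rho> = mat (1 / of_nat CARD('n))}"

definition Uset :: "(complex^('n::finite \<times> 'n)^('n \<times> 'n)) set" where
  "Uset = convex hull
     {kron (mat 1) U ** proj Omega ** kron (mat 1) (cadj U) | U. unitary_mat U}"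

definition Wset :: "(complex^('n::finite \<times> 'n)^('n \<times> 'n)) set" where
  "Wset = {W. hermitian W \<and> (\<forall>\<sigma>\<in>(Uset :: (complex^('n \<times> 'n)^('n \<times> 'n)) set).
                                  0 \<le> trace (W ** \<sigma>))}"

definition Gset :: "'g topology \<Rightarrow> ('g \<Rightarrow> complex^'n^'n) \<Rightarrow> ('g \<Rightarrow> complex^'n^'n)
    \<Rightarrow> (complex^('n \<times> 'n)^('n \<times> 'n)) set" where
  "Gset T V Vt = {kron (cconj (V g)) (Vt g) | g. g \<in> topspace T}"

definition commutant :: "(complex^'m^'m) set \<Rightarrow> (complex^'m^'m) set" where
  "commutant G = {X. \<forall>Y\<in>G. X ** Y = Y ** X}"

end

theory Submission
  imports Defs
begin

lemma sum_UNIV_prod: "sum f (UNIV :: ('a::finite \<times> 'b::finite) set) = (\<Sum>i\<in>UNIV. \<Sum>j\<in>UNIV. f (i,j))"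
proof -
  have "sum f (UNIV \<times> UNIV) = (\<Sum>i\<in>(UNIV::'a set). \<Sum>j\<in>(UNIV::'b set). f (i,j))"
    by (simp add: sum.cartesian_product)
  then show ?thesis by simp
qed

lemma mult_if0: "x * (if P then y else 0) = (if P then x * y else (0::'a::mult_zero))"
  by simp
lemma if01_mult: "(if P then 1 else 0) * x = (if P then x else (0::'a::{mult_zero,monoid_mult}))"
  by simp
lemma if0_mult: "(if P then x else 0) * y = (if P then x * y else (0::'a::mult_zero))"
  by simp

lemma cadj_mult: "cadj (A ** B) = cadj B ** cadj A"
  by (simp add: vec_eq_iff cadj_def matrix_matrix_mult_def mult.commute)

lemma cadj_cadj[simp]: "cadj (cadj A) = A"
  by (simp add: vec_eq_iff cadj_def)

lemma cadj_mat[simp]: "cadj (mat 1 :: complex^'n^'n) = mat 1"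
  by (simp add: vec_eq_iff cadj_def mat_def)

lemma cadj_add: "cadj (A + B) = cadj A + cadj B"
  by (simp add: vec_eq_iff cadj_def)

lemma cadj_diff: "cadj (A - B) = cadj A - cadj B"
  by (simp add: vec_eq_iff cadj_def)

lemma cadj_scaleR: "cadj (r *\<^sub>R A) = r *\<^sub>R cadj A"
  by (simp add: vec_eq_iff cadj_def)

lemma cconj_mult: "cconj (A ** B) = cconj A ** cconj B"
  by (simp add: vec_eq_iff cconj_def matrix_matrix_mult_def)

lemma cadj_cconj: "cadj (cconj A) = cconj (cadj A)"
  by (simp add: vec_eq_iff cconj_def cadj_def)

lemma cconj_mat[simp]: "cconj (mat 1 :: complex^'n^'n) = mat 1"
  by (simp add: vec_eq_iff cconj_def mat_def)

lemma kron_mult: "kron A B ** kron C D = kron (A ** C) (B ** D)"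
  apply (simp add: vec_eq_iff kron_def matrix_matrix_mult_def)
  by (simp add: sum_UNIV_prod sum_product algebra_simps)

lemma cadj_kron: "cadj (kron A B) = kron (cadj A) (cadj B)"
  by (simp add: vec_eq_iff cadj_def kron_def)

lemma kron_mat1: "kron (mat 1) (mat 1) = (mat 1 :: complex^('n::finite\<times>'n)^('n\<times>'n))"
  by (simp add: vec_eq_iff kron_def mat_def prod_eq_iff)

lemma unitary_mult: "unitary_mat A \<Longrightarrow> unitary_mat B \<Longrightarrow> unitary_mat (A ** B)"
  unfolding unitary_mat_def cadj_mult
  by (metis matrix_mul_assoc matrix_mul_lid)

lemma unitary_cadj: "unitary_mat A \<Longrightarrow> unitary_mat (cadj A)"
  unfolding unitary_mat_def by simp

lemma unitary_cconj: "unitary_mat A \<Longrightarrow> unitary_mat (cconj A)"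
  unfolding unitary_mat_def by (simp add: cadj_cconj cconj_mult[symmetric])

lemma unitary_kron: "unitary_mat A \<Longrightarrow> unitary_mat B \<Longrightarrow> unitary_mat (kron A B)"
  unfolding unitary_mat_def by (simp add: cadj_kron kron_mult kron_mat1)

lemma unitary_mat1: "unitary_mat (mat 1)"
  unfolding unitary_mat_def by simp

lemma proj_mult: "proj (M *v v) = M ** proj v ** cadj M"
  apply (simp add: vec_eq_iff proj_def matrix_matrix_mult_def matrix_vector_mult_def cadj_def
     sum_distrib_left sum_distrib_right)
  apply (intro allI sum.cong refl)
  by (simp add: algebra_simps)

lemma omega_trick: "kron (cconj A) B *v Omega = kron (mat 1) (B ** cadj A) *v (Omega :: complex^('n::finite\<times>'n))"
proof -
  have "(kron (cconj A) B *v Omega) $ p = (kron (mat 1) (B ** cadj A) *v (Omega :: complex^('n\<times>'n))) $ p" for p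
  proof -
    obtain i j where p: "p = (i,j)" by fastforce
    define c where "c = complex_of_real (1 / sqrt (real CARD('n)))"
    have l: "(kron (cconj A) B *v Omega) $ p = (\<Sum>k\<in>UNIV. cconj A $ i $ k * B $ j $ k * c)"
      unfolding matrix_vector_mult_def kron_def Omega_def p c_def
      by (simp add: sum_UNIV_prod mult_if0 divide_inverse)
    have r: "(kron (mat 1) (B ** cadj A) *v (Omega :: complex^('n\<times>'n))) $ p = (B ** cadj A) $ j $ i * c"
      unfolding matrix_vector_mult_def kron_def Omega_def p c_def mat_def
      by (simp add: sum_UNIV_prod mult_if0 if01_mult if0_mult divide_inverse)
    show ?thesis unfolding l r
      by (simp add: matrix_matrix_mult_def cadj_def cconj_def sum_distrib_right sum_distrib_left mult.commute mult.left_commute)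
  qed
  then show ?thesis by (simp add: vec_eq_iff)
qed

definition act :: "complex^'m^'m \<Rightarrow> complex^'m^'m \<Rightarrow> complex^'m^'m" where
  "act Y X = Y ** X ** cadj Y"

lemma mat_mult_scaleR_right: "A ** (r *\<^sub>R B) = r *\<^sub>R (A ** (B :: complex^'k^'m))"
  by (simp add: vec_eq_iff matrix_matrix_mult_def scaleR_sum_right)

lemma mat_mult_scaleR_left: "(r *\<^sub>R A) ** B = r *\<^sub>R (A ** (B :: complex^'k^'m))"
  by (simp add: vec_eq_iff matrix_matrix_mult_def scaleR_sum_right)

lemma mat_mult_add_right: "(A + B) ** C = A ** C + B ** (C :: complex^'k^'m)"
  by (simp add: vec_eq_iff matrix_matrix_mult_def sum.distrib algebra_simps)

lemma mat_mult_diff_right: "(A - B) ** C = A ** C - B ** (C :: complex^'k^'m)"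
  by (simp add: vec_eq_iff matrix_matrix_mult_def sum_subtractf algebra_simps)

lemma mat_mult_diff_left: "C ** (A - B) = C ** A - C ** (B :: complex^'k^'m)"
  by (simp add: vec_eq_iff matrix_matrix_mult_def sum_subtractf algebra_simps)

lemma act_add: "act Y (A + B) = act Y A + act Y B"
  by (simp add: act_def matrix_add_ldistrib mat_mult_add_right)

lemma act_diff: "act Y (A - B) = act Y A - act Y B"
  by (simp add: act_def mat_mult_diff_left mat_mult_diff_right)

lemma act_scaleR: "act Y (r *\<^sub>R A) = r *\<^sub>R act Y A"
  by (simp add: act_def mat_mult_scaleR_left mat_mult_scaleR_right)

lemma linear_act: "linear (act Y)"
  by (rule linearI) (simp_all add: act_add act_scaleR)

lemma act_act: "act Y (act Z X) = act (Y ** Z) X"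
  by (simp add: act_def cadj_mult matrix_mul_assoc)

lemma act_unitary_commute:
  assumes "unitary_mat Y" shows "act Y X = X \<longleftrightarrow> X ** Y = Y ** X"
proof
  assume "act Y X = X"
  then have "Y ** X ** cadj Y ** Y = X ** Y" by (simp add: act_def)
  then show "X ** Y = Y ** X" using assms by (simp add: unitary_mat_def matrix_mul_assoc[symmetric])
next
  assume "X ** Y = Y ** X"
  then show "act Y X = X" using assms
    by (simp add: act_def unitary_mat_def) (metis matrix_mul_assoc matrix_mul_rid)
qed

definition gen :: "complex^'n^'n \<Rightarrow> complex^('n::finite\<times>'n)^('n\<times>'n)" where
  "gen U = kron (mat 1) U ** proj Omega ** kron (mat 1) (cadj U)"

lemma gen_proj: "gen U = proj (kron (mat 1) U *v Omega)"
  by (simp add: gen_def proj_mult cadj_kron)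

lemma act_gen: "act (kron (cconj A) B) (gen U) = gen (B ** U ** cadj A)"
proof -
  have "act (kron (cconj A) B) (gen U) = proj (kron (cconj A) B *v (kron (mat 1) U *v Omega))"
    by (simp add: gen_proj proj_mult act_def)
  also have "\<dots> = proj (kron (cconj A) (B ** U) *v Omega)"
    by (simp add: matrix_vector_mul_assoc kron_mult)
  also have "\<dots> = gen (B ** U ** cadj A)"
    by (simp add: omega_trick gen_proj)
  finally show ?thesis .
qed

lemma Uset_gen: "Uset = convex hull (gen ` {U. unitary_mat U})"
  unfolding Uset_def gen_def by (rule arg_cong[where f="\<lambda>S. convex hull S"]) auto

lemma act_Uset:
  assumes "unitary_mat A" "unitary_mat B" "\<sigma> \<in> Uset"
  shows "act (kron (cconj A) B) \<sigma> \<in> Uset"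
proof -
  have "act (kron (cconj A) B) ` (gen ` {U. unitary_mat U}) \<subseteq> gen ` {U. unitary_mat U}"
    using assms by (auto simp: act_gen intro!: imageI unitary_mult unitary_cadj)
  then have "act (kron (cconj A) B) ` Uset \<subseteq> Uset"
    unfolding Uset_gen convex_hull_linear_image[OF linear_act] by (rule hull_mono)
  then show ?thesis using assms by blast
qed

lemma norm_sq_trace: "complex_of_real ((norm (X :: complex^'m^'k))^2) = trace (cadj X ** X)"
proof -
  have "(norm X)^2 = (\<Sum>i\<in>UNIV. \<Sum>j\<in>UNIV. (cmod (X$i$j))^2)"
    by (simp add: norm_vec_def L2_set_def sum_nonneg)
  then have "complex_of_real ((norm X)^2) = (\<Sum>i\<in>UNIV. \<Sum>j\<in>UNIV. complex_of_real ((cmod (X$i$j))^2))"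
    by (simp only: of_real_sum)
  also have "\<dots> = (\<Sum>i\<in>UNIV. \<Sum>j\<in>UNIV. cnj (X$i$j) * X$i$j)"
    by (simp only: complex_norm_square mult.commute)
  also have "\<dots> = trace (cadj X ** X)"
    by (simp add: trace_def matrix_matrix_mult_def cadj_def) (rule sum.swap)
  finally show ?thesis .
qed

lemma norm_act:
  assumes "unitary_mat Y" shows "norm (act Y X) = norm X"
proof -
  have "trace (cadj (act Y X) ** act Y X) = trace (Y ** (cadj X ** X) ** cadj Y)"
    using assms unfolding act_def cadj_mult unitary_mat_def
    by (simp add: matrix_mul_assoc) (metis matrix_mul_assoc matrix_mul_lid)
  also have "\<dots> = trace (cadj X ** X)"
    using assms unfolding unitary_mat_def
    by (metis trace_mul_sym matrix_mul_assoc matrix_mul_rid)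
  finally have "complex_of_real ((norm (act Y X))^2) = complex_of_real ((norm X)^2)"
    by (simp only: norm_sq_trace)
  then have "(norm (act Y X))^2 = (norm X)^2" using of_real_eq_iff by blast
  then show ?thesis by (simp add: power2_eq_iff_nonneg)
qed

lemma fixed_point_min_norm:
  fixes C :: "'a::euclidean_space set"
  assumes "closed C" "convex C" "C \<noteq> {}"
    and "\<forall>f\<in>F. \<forall>x\<in>C. f x \<in> C \<and> norm (f x) = norm x"
  shows "\<exists>x\<in>C. \<forall>f\<in>F. f x = x"
proof -
  define x where "x = closest_point C 0"
  have xC: "x \<in> C" unfolding x_def by (rule closest_point_in_set[OF assms(1,3)])
  have xmin: "\<forall>y\<in>C. dist 0 x \<le> dist 0 y" unfolding x_def by (rule closest_point_exists(2)[OF assms(1,3)])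
  have "f x = x" if "f \<in> F" for f
  proof -
    have "f x \<in> C" "norm (f x) = norm x" using assms(4) that xC by auto
    then have "\<forall>y\<in>C. dist 0 (f x) \<le> dist 0 y" using xmin by simp
    then have "f x = closest_point C 0"
      using closest_point_unique[OF assms(2,1) \<open>f x \<in> C\<close>] by blast
    then show ?thesis unfolding x_def .
  qed
  then show ?thesis using xC by blast
qed

lemma continuous_on_mmult[continuous_intros]:
  fixes f :: "'a::topological_space \<Rightarrow> complex^'k^'m" and g :: "'a \<Rightarrow> complex^'l^'k"
  assumes "continuous_on S f" "continuous_on S g"
  shows "continuous_on S (\<lambda>x. f x ** g x)"
  unfolding matrix_matrix_mult_def by (intro continuous_intros assms)

lemma continuous_on_cadj[continuous_intros]:
  fixes f :: "'a::topological_space \<Rightarrow> complex^'k^'m"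
  assumes "continuous_on S f"
  shows "continuous_on S (\<lambda>x. cadj (f x))"
  unfolding cadj_def by (intro continuous_intros assms)

lemma continuous_on_kron[continuous_intros]:
  fixes f g :: "'a::topological_space \<Rightarrow> complex^'n^'n"
  assumes "continuous_on S f" "continuous_on S g"
  shows "continuous_on S (\<lambda>x. kron (f x) (g x))"
  unfolding kron_def by (intro continuous_intros assms)

lemma compact_unitary: "compact {U :: complex^'n^'n. unitary_mat U}"
proof (rule compact_eq_bounded_closed[THEN iffD2], rule conjI)
  have "norm U = sqrt (real CARD('n))" if "unitary_mat U" for U :: "complex^'n^'n"
  proof -
    have "complex_of_real ((norm U)^2) = trace (mat 1 :: complex^'n^'n)"
      using that by (simp only: norm_sq_trace unitary_mat_def)
    then have "complex_of_real ((norm U)^2) = of_nat CARD('n)" by (simp only: trace_I)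
    then have "(norm U)^2 = real CARD('n)"
      by (metis of_real_eq_iff of_real_of_nat_eq)
    then show ?thesis by (simp add: real_sqrt_unique)
  qed
  then show "bounded {U :: complex^'n^'n. unitary_mat U}"
    unfolding bounded_iff by (intro exI[of _ "sqrt (real CARD('n))"]) auto
  show "closed {U :: complex^'n^'n. unitary_mat U}"
    unfolding unitary_mat_def
    by (intro closed_Collect_conj closed_Collect_eq continuous_intros)
qed

lemma compact_Uset: "compact (Uset :: (complex^('n::finite\<times>'n)^('n\<times>'n)) set)"
proof -
  have cg: "continuous_on UNIV (gen :: complex^'n^'n \<Rightarrow> _)"
    unfolding gen_def by (intro continuous_intros)
  have "compact (gen ` {U :: complex^'n^'n. unitary_mat U})"
    using compact_continuous_image[OF continuous_on_subset[OF cg subset_UNIV] compact_unitary] .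
  then show ?thesis unfolding Uset_gen by (rule compact_convex_hull)
qed

lemma closed_Uset: "closed (Uset :: (complex^('n::finite\<times>'n)^('n\<times>'n)) set)"
  using compact_Uset by (rule compact_imp_closed)

lemma convex_Uset: "convex Uset"
  unfolding Uset_def by (rule convex_convex_hull)

lemma trace_scaleR: "trace (r *\<^sub>R (X :: complex^'n^'n)) = r *\<^sub>R trace X"
  by (simp add: trace_def scaleR_sum_right)

lemma hermitian_proj: "hermitian (proj v)"
  by (simp add: hermitian_def proj_def cadj_def vec_eq_iff mult.commute)

lemma sqrt_sq_complex: "complex_of_real (sqrt (real n)) * complex_of_real (sqrt (real n)) = of_nat n"
  by (simp flip: of_real_mult)

lemma trace_proj_Omega: "trace (proj (Omega :: complex^('n::finite\<times>'n))) = 1"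
  unfolding trace_def proj_def Omega_def
  by (simp add: sum_UNIV_prod if0_mult mult_if0 if_distrib[of cnj] sqrt_sq_complex)

lemma trace_conj_unitary: "unitary_mat K \<Longrightarrow> trace (K ** P ** cadj K) = trace P"
  by (metis trace_mul_sym matrix_mul_assoc unitary_mat_def matrix_mul_lid)

lemma trace_gen: "unitary_mat U \<Longrightarrow> trace (gen U) = 1"
  unfolding gen_proj proj_mult
  by (simp add: trace_conj_unitary unitary_kron unitary_mat1 trace_proj_Omega)

lemma convex_herm_trace: "convex {X :: complex^'m^'m. hermitian X \<and> trace X = 1}"
  apply (rule convexI)
  apply (simp add: hermitian_def cadj_add cadj_scaleR trace_add trace_scaleR)
  by (metis scaleR_add_left scaleR_one)

lemma gen_herm_trace: "gen ` {U. unitary_mat U} \<subseteq> {X. hermitian X \<and> trace X = 1}"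
proof
  fix X assume "X \<in> gen ` {U. unitary_mat U}"
  then obtain U where U: "unitary_mat U" "X = gen U" by auto
  show "X \<in> {X. hermitian X \<and> trace X = 1}"
    using trace_gen[OF U(1)] hermitian_proj[of "kron (mat 1) U *v Omega"] U(2)
    unfolding gen_proj by simp
qed

lemma Uset_herm_trace:
  fixes \<sigma> :: "complex^('n::finite\<times>'n)^('n\<times>'n)"
  assumes "\<sigma> \<in> Uset" shows "hermitian \<sigma> \<and> trace \<sigma> = 1"
proof -
  have "convex hull (gen ` {U. unitary_mat U}) \<subseteq> {X :: complex^('n\<times>'n)^('n\<times>'n). hermitian X \<and> trace X = 1}"
    by (rule hull_minimal[where S=convex, OF gen_herm_trace convex_herm_trace])
  then show ?thesis using assms unfolding Uset_gen by blast
qed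

lemma cnj_if0: "cnj (if P then x else 0) = (if P then cnj x else 0)"
  by simp

lemma qform_two:
  fixes A :: "complex^'n^'n"
  assumes "i \<noteq> j" and x: "x = (\<chi> m. (if m = i then a else 0) + (if m = j then b else 0))"
  shows "(\<Sum>k\<in>UNIV. \<Sum>l\<in>UNIV. cnj (x $ k) * A $ k $ l * x $ l)
     = cnj a * a * A$i$i + cnj a * b * A$i$j + cnj b * a * A$j$i + cnj b * b * A$j$j"
proof -
  have inner: "(\<Sum>l\<in>UNIV. A$k$l * x$l) = A$k$i * a + A$k$j * b" for k
    by (simp add: x distrib_left sum.distrib mult_if0)
  have "(\<Sum>k\<in>UNIV. \<Sum>l\<in>UNIV. cnj (x $ k) * A $ k $ l * x $ l)
      = (\<Sum>k\<in>UNIV. cnj (x $ k) * (A$k$i * a + A$k$j * b))"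
    by (simp add: inner[symmetric] sum_distrib_left mult.assoc)
  also have "\<dots> = cnj a * (A$i$i * a + A$i$j * b) + cnj b * (A$j$i * a + A$j$j * b)"
    using assms(1) by (simp add: x distrib_right sum.distrib if0_mult cnj_if0)
  finally show ?thesis by (simp add: algebra_simps)
qed

lemma qform_one:
  fixes A :: "complex^'n^'n"
  shows "(\<Sum>k\<in>UNIV. \<Sum>l\<in>UNIV. cnj ((\<chi> m. if m = i then 1 else 0) $ k) * A $ k $ l * (\<chi> m. if m = i then 1 else 0) $ l) = A$i$i"
  by (simp add: if0_mult mult_if0 cnj_if0)
lemma psd_hermitian:
  fixes A :: "complex^'n^'n"
  assumes "psd A" shows "hermitian A"
proof -
  have q: "0 \<le> (\<Sum>k\<in>UNIV. \<Sum>l\<in>UNIV. cnj (x $ k) * A $ k $ l * x $ l)" for x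
    using assms unfolding psd_def by blast
  have diag: "Im (A$i$i) = 0" for i
    using q[of "\<chi> m. if m = i then 1 else 0", unfolded qform_one] by (simp add: less_eq_complex_def)
  have "cnj (A$j$i) = A$i$j" for i j
  proof (cases "i = j")
    case True then show ?thesis using diag[of i] by (simp add: complex_eq_iff)
  next
    case False
    have h1: "Im (A$i$j) + Im (A$j$i) = 0"
      using q[of "\<chi> m. (if m = i then 1 else 0) + (if m = j then 1 else 0)", unfolded qform_two[OF False refl]] diag[of i] diag[of j]
      by (simp add: less_eq_complex_def)
    have h2: "Re (A$i$j) - Re (A$j$i) = 0"
      using q[of "\<chi> m. (if m = i then 1 else 0) + (if m = j then \<i> else 0)", unfolded qform_two[OF False refl]] diag[of i] diag[of j]
      by (simp add: less_eq_complex_def)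
    show ?thesis using h1 h2 by (simp add: complex_eq_iff)
  qed
  then show ?thesis unfolding hermitian_def cadj_def by (simp add: vec_eq_iff)
qed

lemma trace_rho:
  fixes \<rho> :: "complex^('n::finite\<times>'n)^('n\<times>'n)"
  assumes "ptr1 \<rho> = mat (1 / of_nat CARD('n))"
  shows "trace \<rho> = 1"
proof -
  have "trace \<rho> = (\<Sum>j\<in>UNIV. \<Sum>i\<in>UNIV. \<rho> $ (i,j) $ (i,j))"
    unfolding trace_def sum_UNIV_prod by (rule sum.swap)
  also have "\<dots> = (\<Sum>j\<in>(UNIV::'n set). ptr1 \<rho> $ j $ j)" by (simp add: ptr1_def)
  also have "\<dots> = (\<Sum>j\<in>(UNIV::'n set). 1 / of_nat CARD('n))" by (simp add: assms mat_def)
  also have "\<dots> = 1" by simp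
  finally show ?thesis .
qed

lemma Gset_kron:
  assumes "unitary_rep T mul V" "unitary_rep T mul Vt" "Y \<in> Gset T V Vt"
  shows "\<exists>A B. unitary_mat A \<and> unitary_mat B \<and> Y = kron (cconj A) B"
  using assms unfolding Gset_def unitary_rep_def by blast

lemma Gset_unitary:
  assumes "unitary_rep T mul V" "unitary_rep T mul Vt" "Y \<in> Gset T V Vt"
  shows "unitary_mat Y"
  using Gset_kron[OF assms] unitary_kron unitary_cconj by blast

lemma Gset_act_Uset:
  assumes "unitary_rep T mul V" "unitary_rep T mul Vt" "Y \<in> Gset T V Vt" "\<sigma> \<in> Uset"
  shows "act Y \<sigma> \<in> Uset"
  using Gset_kron[OF assms(1-3)] act_Uset assms(4) by blast

lemma Gset_act_adj_Uset:
  assumes "unitary_rep T mul V" "unitary_rep T mul Vt" "Y \<in> Gset T V Vt" "\<sigma> \<in> Uset"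
  shows "act (cadj Y) \<sigma> \<in> Uset"
proof -
  obtain A B where AB: "unitary_mat A" "unitary_mat B" "Y = kron (cconj A) B"
    using Gset_kron[OF assms(1-3)] by blast
  have "cadj Y = kron (cconj (cadj A)) (cadj B)" using AB(3) by (simp add: cadj_kron cadj_cconj)
  then show ?thesis using act_Uset[OF unitary_cadj[OF AB(1)] unitary_cadj[OF AB(2)] assms(4)] by simp
qed

lemma commutant_act:
  assumes "unitary_rep T mul V" "unitary_rep T mul Vt"
  shows "X \<in> commutant (Gset T V Vt) \<longleftrightarrow> (\<forall>Y\<in>Gset T V Vt. act Y X = X)"
  unfolding commutant_def using act_unitary_commute Gset_unitary[OF assms] by blast

lemma act_adj_fixed:
  assumes "unitary_mat Y" "act Y X = X" shows "act (cadj Y) X = X"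
proof -
  have "X ** Y = Y ** X" using act_unitary_commute assms by blast
  then have "cadj Y ** X ** Y = X"
    using assms(1) unfolding unitary_mat_def by (metis matrix_mul_assoc matrix_mul_lid)
  then show ?thesis by (simp add: act_def)
qed

lemma trace_act_left: "trace (act Y W ** \<sigma>) = trace (W ** act (cadj Y) \<sigma>)"
proof -
  have "trace (act Y W ** \<sigma>) = trace ((Y ** W) ** (cadj Y ** \<sigma>))"
    by (simp add: act_def matrix_mul_assoc)
  also have "\<dots> = trace ((cadj Y ** \<sigma>) ** (Y ** W))" by (rule trace_mul_sym)
  also have "\<dots> = trace (W ** act (cadj Y) \<sigma>)"
    by (metis act_def cadj_cadj matrix_mul_assoc trace_mul_sym)
  finally show ?thesis .
qed

lemma closed_trace_nonneg: "closed {W :: complex^'m^'m. 0 \<le> trace (W ** \<sigma>)}"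
  unfolding less_eq_complex_def trace_def
  by (intro closed_Collect_conj closed_Collect_le closed_Collect_eq continuous_intros)

lemma closed_Wset: "closed (Wset :: (complex^('n::finite\<times>'n)^('n\<times>'n)) set)"
proof -
  have eq: "Wset = {W :: complex^('n\<times>'n)^('n\<times>'n). cadj W = W} \<inter> (\<Inter>\<sigma>\<in>Uset. {W. 0 \<le> trace (W ** \<sigma>)})"
    unfolding Wset_def hermitian_def by auto
  have "closed {W :: complex^('n\<times>'n)^('n\<times>'n). cadj W = W}"
    by (intro closed_Collect_eq continuous_intros)
  then show ?thesis unfolding eq by (intro closed_Int closed_INT ballI closed_trace_nonneg)
qed

lemma convex_Wset: "convex Wset"
proof (rule convexI)
  fix X Y :: "complex^('a\<times>'a)^('a\<times>'a)" and u v :: real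
  assume X: "X \<in> Wset" and Y: "Y \<in> Wset" and uv: "0 \<le> u" "0 \<le> v" "u + v = 1"
  have "hermitian (u *\<^sub>R X + v *\<^sub>R Y)"
    using X Y unfolding Wset_def hermitian_def by (simp add: cadj_add cadj_scaleR)
  moreover have "0 \<le> trace ((u *\<^sub>R X + v *\<^sub>R Y) ** \<sigma>)" if "\<sigma> \<in> Uset" for \<sigma>
  proof -
    have "trace ((u *\<^sub>R X + v *\<^sub>R Y) ** \<sigma>) = u *\<^sub>R trace (X ** \<sigma>) + v *\<^sub>R trace (Y ** \<sigma>)"
      by (simp add: mat_mult_add_right mat_mult_scaleR_left trace_add trace_scaleR)
    moreover have "0 \<le> trace (X ** \<sigma>)" "0 \<le> trace (Y ** \<sigma>)" using X Y that unfolding Wset_def by auto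
    ultimately show ?thesis using uv by (simp add: add_nonneg_nonneg scaleR_nonneg_nonneg)
  qed
  ultimately show "u *\<^sub>R X + v *\<^sub>R Y \<in> Wset" unfolding Wset_def by blast
qed

lemma inner_trace: "inner a X = Re (trace (cadj a ** (X :: complex^'m^'m)))"
  unfolding inner_vec_def inner_complex_def trace_def matrix_matrix_mult_def cadj_def
  by simp (rule sum.swap)

lemma trace_herm_cnj:
  fixes X :: "complex^'m^'m"
  assumes "hermitian X" shows "trace (a ** X) = cnj (trace (cadj a ** X))"
proof -
  have X: "cnj (X $ k $ i) = X $ i $ k" for i k
    using assms unfolding hermitian_def cadj_def by (metis vec_lambda_beta)
  show ?thesis
    unfolding trace_def matrix_matrix_mult_def cadj_def
    by (simp add: X mult.commute) (rule sum.swap)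
qed

lemma trace_herm_part:
  fixes X :: "complex^'m^'m"
  assumes "hermitian X"
  shows "trace (((1/2) *\<^sub>R (cadj a + a)) ** X) = complex_of_real (inner a X)"
proof -
  have "trace (((1/2) *\<^sub>R (cadj a + a)) ** X) = (1/2) *\<^sub>R (trace (cadj a ** X) + cnj (trace (cadj a ** X)))"
    using trace_herm_cnj[OF assms, of a]
    by (simp add: mat_mult_scaleR_left mat_mult_add_right trace_scaleR trace_add)
  also have "\<dots> = complex_of_real (inner a X)"
    unfolding complex_add_cnj inner_trace by (simp add: scaleR_conv_of_real)
  finally show ?thesis .
qed

lemma decomp_twirl:
  fixes \<rho> :: "complex^('n::finite\<times>'n)^('n\<times>'n)"
  assumes rep: "unitary_rep T mul V" "unitary_rep T mul Vt"
    and rc: "\<rho> \<in> commutant (Gset T V Vt)"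
    and dec: "\<rho> = ap *\<^sub>R \<sigma>p - an *\<^sub>R \<sigma>n" "\<sigma>p \<in> Uset" "\<sigma>n \<in> Uset"
  shows "\<exists>\<sigma>p' \<sigma>n'. \<rho> = ap *\<^sub>R \<sigma>p' - an *\<^sub>R \<sigma>n' \<and> \<sigma>p' \<in> Uset \<inter> commutant (Gset T V Vt)
                  \<and> \<sigma>n' \<in> Uset \<inter> commutant (Gset T V Vt)"
proof -
  define C where "C = (Uset \<times> Uset) \<inter> {p :: (complex^('n\<times>'n)^('n\<times>'n)) \<times> (complex^('n\<times>'n)^('n\<times>'n)).
                          ap *\<^sub>R fst p - an *\<^sub>R snd p = \<rho>}"
  define F where "F = (\<lambda>Y p. (act Y (fst p), act Y (snd p))) ` Gset T V Vt"
  have cl: "closed C" unfolding C_def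
    by (intro closed_Int closed_Times closed_Uset closed_Collect_eq continuous_intros)
  have cv: "convex C" unfolding C_def
  proof (intro convex_Int convex_Times convex_Uset convexI)
    fix x y :: "(complex^('n\<times>'n)^('n\<times>'n)) \<times> (complex^('n\<times>'n)^('n\<times>'n))" and u v :: real
    assume x: "x \<in> {p. ap *\<^sub>R fst p - an *\<^sub>R snd p = \<rho>}" and y: "y \<in> {p. ap *\<^sub>R fst p - an *\<^sub>R snd p = \<rho>}"
      and uv: "0 \<le> u" "0 \<le> v" "u + v = 1"
    have "ap *\<^sub>R fst (u *\<^sub>R x + v *\<^sub>R y) - an *\<^sub>R snd (u *\<^sub>R x + v *\<^sub>R y)
        = u *\<^sub>R (ap *\<^sub>R fst x - an *\<^sub>R snd x) + v *\<^sub>R (ap *\<^sub>R fst y - an *\<^sub>R snd y)"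
      by (simp add: algebra_simps)
    also have "\<dots> = (u + v) *\<^sub>R \<rho>" using x y by (simp add: scaleR_add_left)
    also have "\<dots> = \<rho>" using uv by simp
    finally show "u *\<^sub>R x + v *\<^sub>R y \<in> {p. ap *\<^sub>R fst p - an *\<^sub>R snd p = \<rho>}" by simp
  qed
  have ne: "C \<noteq> {}" using dec unfolding C_def by auto
  have inv: "\<forall>f\<in>F. \<forall>x\<in>C. f x \<in> C \<and> norm (f x) = norm x"
  proof (intro ballI)
    fix f x assume f: "f \<in> F" and x: "x \<in> C"
    then obtain Y where Y: "Y \<in> Gset T V Vt" "f = (\<lambda>p. (act Y (fst p), act Y (snd p)))"
      unfolding F_def by blast
    have uY: "unitary_mat Y" using Gset_unitary[OF rep Y(1)] .
    have rY: "act Y \<rho> = \<rho>" using rc Y(1) commutant_act[OF rep] by blast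
    have "act Y (fst x) \<in> Uset" "act Y (snd x) \<in> Uset"
      using x Gset_act_Uset[OF rep Y(1)] unfolding C_def by auto
    moreover have "ap *\<^sub>R act Y (fst x) - an *\<^sub>R act Y (snd x) = \<rho>"
    proof -
      have "ap *\<^sub>R act Y (fst x) - an *\<^sub>R act Y (snd x) = act Y (ap *\<^sub>R fst x - an *\<^sub>R snd x)"
        by (simp add: act_diff act_scaleR)
      also have "\<dots> = act Y \<rho>" using x unfolding C_def by simp
      finally show ?thesis using rY by simp
    qed
    ultimately have "f x \<in> C" unfolding C_def Y(2) by auto
    moreover have "norm (f x) = norm x"
    proof -
      have "norm (f x) = norm (fst x, snd x)" unfolding Y(2) norm_Pair norm_act[OF uY] by (rule refl)
      then show ?thesis by (simp only: prod.collapse)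
    qed
    ultimately show "f x \<in> C \<and> norm (f x) = norm x" by blast
  qed
  obtain p where p: "p \<in> C" "\<forall>f\<in>F. f p = p"
    using fixed_point_min_norm[OF cl cv ne inv] by blast
  have "act Y (fst p) = fst p \<and> act Y (snd p) = snd p" if "Y \<in> Gset T V Vt" for Y
  proof -
    have "(\<lambda>p. (act Y (fst p), act Y (snd p))) \<in> F" unfolding F_def using that by blast
    from bspec[OF p(2) this] have "(act Y (fst p), act Y (snd p)) = p" by simp
    then show ?thesis by (simp add: prod_eq_iff)
  qed
  then have "fst p \<in> commutant (Gset T V Vt)" "snd p \<in> commutant (Gset T V Vt)"
    using commutant_act[OF rep] by blast+
  then show ?thesis using p(1) unfolding C_def by (intro exI[of _ "fst p"] exI[of _ "snd p"]) auto
qed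

lemma sets_eq:
  fixes \<rho> :: "complex^('n::finite\<times>'n)^('n\<times>'n)"
  assumes rep: "unitary_rep T mul V" "unitary_rep T mul Vt"
    and rc: "\<rho> \<in> commutant (Gset T V Vt)"
  shows "{h ap an | ap an \<sigma>p \<sigma>n. \<rho> = ap *\<^sub>R \<sigma>p - an *\<^sub>R \<sigma>n \<and> ap \<ge> 0 \<and> an \<ge> 0
                                    \<and> \<sigma>p \<in> Uset \<and> \<sigma>n \<in> Uset}
      = {h ap an | ap an \<sigma>p \<sigma>n. \<rho> = ap *\<^sub>R \<sigma>p - an *\<^sub>R \<sigma>n \<and> ap \<ge> 0 \<and> an \<ge> 0
                                    \<and> \<sigma>p \<in> Uset \<inter> commutant (Gset T V Vt)
                                    \<and> \<sigma>n \<in> Uset \<inter> commutant (Gset T V Vt)}"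
  (is "?A = ?B")
proof
  show "?B \<subseteq> ?A" by blast
  show "?A \<subseteq> ?B"
  proof
    fix z assume "z \<in> ?A"
    then obtain ap an \<sigma>p \<sigma>n where z: "z = h ap an" "\<rho> = ap *\<^sub>R \<sigma>p - an *\<^sub>R \<sigma>n" "ap \<ge> 0" "an \<ge> 0"
      "\<sigma>p \<in> Uset" "\<sigma>n \<in> Uset" by blast
    obtain \<sigma>p' \<sigma>n' where "\<rho> = ap *\<^sub>R \<sigma>p' - an *\<^sub>R \<sigma>n'" "\<sigma>p' \<in> Uset \<inter> commutant (Gset T V Vt)"
      "\<sigma>n' \<in> Uset \<inter> commutant (Gset T V Vt)"
      using decomp_twirl[OF rep rc z(2,5,6)] by blast
    then show "z \<in> ?B" using z by blast
  qed
qed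

lemma separation:
  fixes \<rho> :: "complex^('n::finite\<times>'n)^('n\<times>'n)"
  assumes rep: "unitary_rep T mul V" "unitary_rep T mul Vt"
    and rS: "\<rho> \<in> Sset" and rc: "\<rho> \<in> commutant (Gset T V Vt)" and nU: "\<rho> \<notin> Uset"
  shows "\<exists>W \<in> Wset \<inter> commutant (Gset T V Vt). \<not> (0 \<le> trace (W ** \<rho>))"
proof -
  have rh: "hermitian \<rho>" using rS psd_hermitian unfolding Sset_def by blast
  have rt: "trace \<rho> = 1" using rS trace_rho unfolding Sset_def by blast
  obtain a b where ab: "inner a \<rho> < b" "\<forall>x\<in>Uset. inner a x > b"
    using separating_hyperplane_closed_point[OF convex_Uset closed_Uset nU] by blast
  define W0 where "W0 = (1/2) *\<^sub>R (cadj a + a) - b *\<^sub>R (mat 1 :: complex^('n\<times>'n)^('n\<times>'n))"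
  have tW0: "trace (W0 ** X) = complex_of_real (inner a X - b)" if "hermitian X" "trace X = 1" for X
  proof -
    have "trace (W0 ** X) = trace (((1/2) *\<^sub>R (cadj a + a)) ** X) - b *\<^sub>R trace X"
      unfolding W0_def by (simp add: mat_mult_diff_right mat_mult_scaleR_left trace_sub trace_scaleR)
    also have "\<dots> = complex_of_real (inner a X) - b *\<^sub>R 1" using trace_herm_part[OF that(1)] that(2) by simp
    also have "\<dots> = complex_of_real (inner a X - b)" by (simp add: scaleR_conv_of_real)
    finally show ?thesis .
  qed
  have hW0: "hermitian W0"
    unfolding W0_def hermitian_def by (simp add: cadj_diff cadj_scaleR cadj_add add.commute)
  have W0W: "W0 \<in> Wset"
  proof -
    have "0 \<le> trace (W0 ** \<sigma>)" if "\<sigma> \<in> Uset" for \<sigma>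
      using tW0[of \<sigma>] Uset_herm_trace[OF that] ab(2)[rule_format, OF that] by (simp add: less_eq_complex_def)
    then show ?thesis using hW0 unfolding Wset_def by blast
  qed
  define C where "C = Wset \<inter> {W. trace (W ** \<rho>) = trace (W0 ** \<rho>)}"
  define F where "F = act ` Gset T V Vt"
  have cl: "closed C" unfolding C_def trace_def
    by (intro closed_Int closed_Wset closed_Collect_eq continuous_intros)
  have cv: "convex C" unfolding C_def
  proof (intro convex_Int convex_Wset convexI)
    fix x y :: "complex^('n\<times>'n)^('n\<times>'n)" and u v :: real
    assume x: "x \<in> {W. trace (W ** \<rho>) = trace (W0 ** \<rho>)}" and y: "y \<in> {W. trace (W ** \<rho>) = trace (W0 ** \<rho>)}"
      and uv: "0 \<le> u" "0 \<le> v" "u + v = 1"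
    have "trace ((u *\<^sub>R x + v *\<^sub>R y) ** \<rho>) = u *\<^sub>R trace (x ** \<rho>) + v *\<^sub>R trace (y ** \<rho>)"
      by (simp add: mat_mult_add_right mat_mult_scaleR_left trace_add trace_scaleR)
    also have "\<dots> = (u + v) *\<^sub>R trace (W0 ** \<rho>)" using x y by (simp add: scaleR_add_left)
    also have "\<dots> = trace (W0 ** \<rho>)" using uv by simp
    finally show "u *\<^sub>R x + v *\<^sub>R y \<in> {W. trace (W ** \<rho>) = trace (W0 ** \<rho>)}" by simp
  qed
  have ne: "C \<noteq> {}" using W0W unfolding C_def by blast
  have inv: "\<forall>f\<in>F. \<forall>x\<in>C. f x \<in> C \<and> norm (f x) = norm x"
  proof (intro ballI)
    fix f W assume f: "f \<in> F" and W: "W \<in> C"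
    then obtain Y where Y: "Y \<in> Gset T V Vt" "f = act Y" unfolding F_def by blast
    have uY: "unitary_mat Y" using Gset_unitary[OF rep Y(1)] .
    have rY: "act (cadj Y) \<rho> = \<rho>"
      using act_adj_fixed[OF uY] rc Y(1) commutant_act[OF rep] by blast
    have WW: "W \<in> Wset" and Wr: "trace (W ** \<rho>) = trace (W0 ** \<rho>)" using W unfolding C_def by auto
    have "hermitian (act Y W)"
      using WW unfolding Wset_def hermitian_def act_def by (simp add: cadj_mult matrix_mul_assoc)
    moreover have "0 \<le> trace (act Y W ** \<sigma>)" if "\<sigma> \<in> Uset" for \<sigma>
      unfolding trace_act_left using WW Gset_act_adj_Uset[OF rep Y(1) that] unfolding Wset_def by blast
    ultimately have "act Y W \<in> Wset" unfolding Wset_def by blast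
    moreover have "trace (act Y W ** \<rho>) = trace (W0 ** \<rho>)"
      unfolding trace_act_left rY using Wr .
    ultimately have "f W \<in> C" unfolding C_def Y(2) by blast
    then show "f W \<in> C \<and> norm (f W) = norm W" using norm_act[OF uY] Y(2) by simp
  qed
  obtain W where W: "W \<in> C" "\<forall>f\<in>F. f W = W"
    using fixed_point_min_norm[OF cl cv ne inv] by blast
  have "W \<in> commutant (Gset T V Vt)"
    using W(2) commutant_act[OF rep] unfolding F_def by blast
  moreover have "\<not> (0 \<le> trace (W ** \<rho>))"
    using W(1) tW0[OF rh rt] ab(1) unfolding C_def by (simp add: less_eq_complex_def)
  ultimately show ?thesis using W(1) unfolding C_def by blast
qed

theorem proposition4:
  fixes T :: "'g topology" and mul :: "'g \<Rightarrow> 'g \<Rightarrow> 'g" and e :: 'g and ginv :: "'g \<Rightarrow> 'g"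
    and V Vt :: "'g \<Rightarrow> complex^'n^'n"
    and \<rho> :: "complex^('n \<times> 'n)^('n \<times> 'n)"
  assumes "compact_group T mul e ginv"
    and "unitary_rep T mul V" and "unitary_rep T mul Vt"
    and "\<rho> \<in> Sset \<inter> commutant (Gset T V Vt)"
  shows "(\<rho> \<in> Uset \<longleftrightarrow> (\<forall>W \<in> Wset \<inter> commutant (Gset T V Vt). 0 \<le> trace (W ** \<rho>)))
    \<and> Inf {ap + an | ap an \<sigma>p \<sigma>n. \<rho> = ap *\<^sub>R \<sigma>p - an *\<^sub>R \<sigma>n \<and> ap \<ge> 0 \<and> an \<ge> 0
                                    \<and> \<sigma>p \<in> Uset \<and> \<sigma>n \<in> Uset}
      = Inf {ap + an | ap an \<sigma>p \<sigma>n. \<rho> = ap *\<^sub>R \<sigma>p - an *\<^sub>R \<sigma>n \<and> ap \<ge> 0 \<and> an \<ge> 0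
                                    \<and> \<sigma>p \<in> Uset \<inter> commutant (Gset T V Vt)
                                    \<and> \<sigma>n \<in> Uset \<inter> commutant (Gset T V Vt)}
    \<and> Inf {an | ap an \<sigma>p \<sigma>n. \<rho> = ap *\<^sub>R \<sigma>p - an *\<^sub>R \<sigma>n \<and> ap \<ge> 0 \<and> an \<ge> 0
                                    \<and> \<sigma>p \<in> Uset \<and> \<sigma>n \<in> Uset}
      = Inf {an | ap an \<sigma>p \<sigma>n. \<rho> = ap *\<^sub>R \<sigma>p - an *\<^sub>R \<sigma>n \<and> ap \<ge> 0 \<and> an \<ge> 0
                                    \<and> \<sigma>p \<in> Uset \<inter> commutant (Gset T V Vt)
                                    \<and> \<sigma>n \<in> Uset \<inter> commutant (Gset T V Vt)}"
proof -
  have rS: "\<rho> \<in> Sset" and rc: "\<rho> \<in> commutant (Gset T V Vt)" using assms(4) by auto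
  have part1: "\<rho> \<in> Uset \<longleftrightarrow> (\<forall>W \<in> Wset \<inter> commutant (Gset T V Vt). 0 \<le> trace (W ** \<rho>))"
  proof
    assume "\<rho> \<in> Uset" then show "\<forall>W \<in> Wset \<inter> commutant (Gset T V Vt). 0 \<le> trace (W ** \<rho>)"
      unfolding Wset_def by blast
  next
    assume h: "\<forall>W \<in> Wset \<inter> commutant (Gset T V Vt). 0 \<le> trace (W ** \<rho>)"
    show "\<rho> \<in> Uset"
    proof (rule ccontr)
      assume "\<rho> \<notin> Uset"
      then show False using separation[OF assms(2,3) rS rc] h by blast
    qed
  qed
  show ?thesis
    using part1 sets_eq[OF assms(2,3) rc, of "\<lambda>ap an. ap + an"] sets_eq[OF assms(2,3) rc, of "\<lambda>ap an. an"]
    by simp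
qed

end
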